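(* Let $\gamma_a,\gamma_s>0$, $\sigma_B>0$, $q>0$, $\lambda>0$, $\varepsilon_a\in(0,2)$, and let $\beta_s$ be the piecewise linear coalbedo described in the context. Then the system \[ \gamma_a T_a'=-\lambda(T_a-T_s)+\varepsilon_a\sigma_B|T_s|^3T_s-2\varepsilon_a\sigma_B|T_a|^3T_a,\qquad \gamma_s T_s'=-\lambda(T_s-T_a)-\sigma_B|T_s|^3T_s+\varepsilon_a\sigma_B|T_a|^3T_a+q\beta_s(T_s) \] has at most finitely many equilibrium points.
   Context: The coalbedo is $\beta_s(T)=\beta_{s,-}$ for $T\le T_{s,-}$, $\beta_s(T)=\beta_{s,-}+(\beta_{s,+}-\beta_{s,-})\frac{T-T_{s,-}}{T_{s,+}-T_{s,-}}$ for $T\in[T_{s,-},T_{s,+}]$, and $\beta_s(T)=\beta_{s,+}$ for $T\ge T_{s,+}$, where $T_{s,+}>T_{s,-}>0$ and $\beta_{s,+}>\beta_{s,-}>0$. An equilibrium point is a point $(T_a,T_s)\in[0,\infty)^2$ at which both right-hand sides vanish. *)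

theory Defs
  imports Complex_Main
begin

definition coalbedo :: "real \<Rightarrow> real \<Rightarrow> real \<Rightarrow> real \<Rightarrow> real \<Rightarrow> real" where
  "coalbedo Tm Tp bm bp T =
     (if T \<le> Tm then bm
      else if T \<le> Tp then bm + (bp - bm) * (T - Tm) / (Tp - Tm)
      else bp)"

text \<open>Right-hand sides of the system (the equations gamma_a T_a' = F_a, gamma_s T_s' = F_s).\<close>
definition F_a :: "real \<Rightarrow> real \<Rightarrow> real \<Rightarrow> real \<Rightarrow> real \<Rightarrow> real" where
  "F_a lam eps sB Ta Ts =
     - lam * (Ta - Ts) + eps * sB * \<bar>Ts\<bar>^3 * Ts - 2 * eps * sB * \<bar>Ta\<bar>^3 * Ta"

definition F_s :: "real \<Rightarrow> real \<Rightarrow> real \<Rightarrow> real \<Rightarrow> (real \<Rightarrow> real) \<Rightarrow> real \<Rightarrow> real \<Rightarrow> real" where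
  "F_s lam eps sB q beta Ta Ts =
     - lam * (Ts - Ta) - sB * \<bar>Ts\<bar>^3 * Ts + eps * sB * \<bar>Ta\<bar>^3 * Ta + q * beta Ts"

end

theory Submission
  imports Defs "HOL-Computational_Algebra.Polynomial"
begin

lemma fin_poly:
  fixes K c A B C D E :: real
  assumes K: "K \<noteq> 0" and c: "c \<noteq> 0"
  shows "finite {t. A*t^4 + B*t + C = K*(c*t^4 + D*t + E)^4}"
proof -
  define Q where "Q = [:E, D, 0, 0, c:]"
  define P where "P = [:C, B, 0, 0, A:]"
  define p where "p = P + (- smult K (Q^4))"
  have dQ: "degree Q = 4" using c unfolding Q_def by simp
  have Q0: "Q \<noteq> 0" using dQ by auto
  have dQ4: "degree (- smult K (Q^4)) = 16" using K dQ Q0 by (simp add: degree_power_eq)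
  have dP: "degree P \<le> 4" unfolding P_def by simp
  have "degree p = 16" unfolding p_def
    by (rule trans[OF degree_add_eq_right]) (use dQ4 dP in simp_all)
  hence "p \<noteq> 0" by auto
  hence fin: "finite {t. poly p t = 0}" by (rule poly_roots_finite)
  have pe: "poly p t = A*t^4 + B*t + C - K*(c*t^4 + D*t + E)^4" for t
  proof -
    have q: "poly Q t = c*t^4 + D*t + E" unfolding Q_def
      by (simp add: algebra_simps power4_eq_xxxx)
    have pp: "poly P t = A*t^4 + B*t + C" unfolding P_def
      by (simp add: algebra_simps power4_eq_xxxx)
    show ?thesis
      unfolding p_def by (simp only: poly_add poly_minus poly_smult poly_power q pp diff_conv_add_uminus)
  qed
  have "{t. A*t^4 + B*t + C = K*(c*t^4 + D*t + E)^4} = {t. poly p t = 0}"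
    by (simp only: pe right_minus_eq)
  with fin show ?thesis by simp
qed

theorem lemma6p2:
  fixes gamma_a gamma_s sigma_B q lam eps_a Tm Tp bm bp :: real
  assumes "gamma_a > 0" and "gamma_s > 0" and "sigma_B > 0" and "q > 0" and "lam > 0"
    and "0 < eps_a" and "eps_a < 2"
    and "0 < Tm" and "Tm < Tp" and "0 < bm" and "bm < bp"
  shows "finite {(Ta, Ts). 0 \<le> Ta \<and> 0 \<le> Ts \<and>
            F_a lam eps_a sigma_B Ta Ts = 0 \<and>
            F_s lam eps_a sigma_B q (coalbedo Tm Tp bm bp) Ta Ts = 0}"
    (is "finite ?S")
proof -
  let ?b = "coalbedo Tm Tp bm bp"
  let ?e = eps_a and ?s = sigma_B
  have K: "?e * ?s \<noteq> 0" and c: "?s * (2 - ?e) \<noteq> 0" using assms by auto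
  have eqs: "?e*?s*a^4 = (?e-1)*?s*t^4 + q*?b t \<and>
     lam^4*((?e-1)*?s*t^4 + q*?b t) = ?e*?s*(lam*t + ?s*(2-?e)*t^4 - 2*q*?b t)^4"
    if "(a,t) \<in> ?S" for a t
  proof -
    from that have a: "a \<ge> 0" and t: "t \<ge> 0"
      and f1: "F_a lam ?e ?s a t = 0" and f2: "F_s lam ?e ?s q ?b a t = 0" by auto
    have aa: "\<bar>a\<bar>^3*a = a^4" "\<bar>t\<bar>^3*t = t^4" using a t by (simp_all add: power4_eq_xxxx power3_eq_cube)
    have g1: "- lam * (a - t) + ?e * ?s * (\<bar>t\<bar>^3 * t) - 2 * ?e * ?s * (\<bar>a\<bar>^3 * a) = 0"
      using f1 unfolding F_a_def by (simp add: mult.assoc)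
    have g2: "- lam * (t - a) - ?s * (\<bar>t\<bar>^3 * t) + ?e * ?s * (\<bar>a\<bar>^3 * a) + q * ?b t = 0"
      using f2 unfolding F_s_def by (simp add: mult.assoc)
    have E1: "lam*a = lam*t + ?e*?s*t^4 - 2*?e*?s*a^4"
      using g1 unfolding aa by (simp add: right_diff_distrib)
    have E2: "?e*?s*a^4 = (?e-1)*?s*t^4 + q*?b t"
      using g1 g2 unfolding aa by (simp add: left_diff_distrib right_diff_distrib)
    have E3: "lam*a = lam*t + ?s*(2-?e)*t^4 - 2*q*?b t"
      using E1 E2 by (simp add: left_diff_distrib right_diff_distrib)
    have P4: "(lam*a)^4 = lam^4*a^4" by (simp add: power_mult_distrib)
    have "lam^4*((?e-1)*?s*t^4 + q*?b t) = lam^4*(?e*?s*a^4)" by (simp only: E2)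
    also have "\<dots> = ?e*?s*(lam*a)^4" by (simp add: power_mult_distrib mult_ac)
    also have "\<dots> = ?e*?s*(lam*t + ?s*(2-?e)*t^4 - 2*q*?b t)^4" by (simp only: E3)
    finally show ?thesis using E2 by blast
  qed
  define b1 where "b1 = (bp - bm) / (Tp - Tm)"
  define G where "G = (\<lambda>b0 b1. {t. (lam^4*((?e-1)*?s))*t^4 + (lam^4*q*b1)*t + lam^4*q*b0
      = (?e*?s)*((?s*(2-?e))*t^4 + (lam - 2*q*b1)*t + (-2*q*b0))^4})"
  have Gfin: "finite (G b0 b1')" for b0 b1' unfolding G_def by (rule fin_poly[OF K c])
  have gen: "t \<in> G b0 b1'"
    if k: "lam^4*((?e-1)*?s*t^4 + q*?b t) = ?e*?s*(lam*t + ?s*(2-?e)*t^4 - 2*q*?b t)^4"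
      and h: "?b t = b0 + b1'*t" for t b0 b1'
  proof -
    have L: "(lam^4*((?e-1)*?s))*t^4 + (lam^4*q*b1')*t + lam^4*q*b0 = lam^4*((?e-1)*?s*t^4 + q*?b t)"
      unfolding h by (simp add: distrib_left mult_ac)
    have R: "(?s*(2-?e))*t^4 + (lam - 2*q*b1')*t + (-2*q*b0) = lam*t + ?s*(2-?e)*t^4 - 2*q*?b t"
      unfolding h by (simp add: algebra_simps)
    show ?thesis unfolding G_def mem_Collect_eq L R using k by simp
  qed
  have sub: "snd ` ?S \<subseteq> G bm 0 \<union> G bp 0 \<union> G (bm - b1*Tm) b1"
  proof
    fix t assume "t \<in> snd ` ?S"
    then obtain a where m: "(a,t) \<in> ?S" by force
    have k: "lam^4*((?e-1)*?s*t^4 + q*?b t) = ?e*?s*(lam*t + ?s*(2-?e)*t^4 - 2*q*?b t)^4"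
      using eqs[OF m] by blast
    have mid: "bm + (bp - bm) * (t - Tm) / (Tp - Tm) = (bm - b1*Tm) + b1*t"
    proof -
      have "(bp - bm) * (t - Tm) / (Tp - Tm) = b1 * (t - Tm)" unfolding b1_def by simp
      thus ?thesis by (simp add: algebra_simps)
    qed
    have "?b t = bm + 0*t \<or> ?b t = bp + 0*t \<or> ?b t = (bm - b1*Tm) + b1*t"
      unfolding coalbedo_def using mid by simp
    then show "t \<in> G bm 0 \<union> G bp 0 \<union> G (bm - b1*Tm) b1"
      using gen[OF k] by blast
  qed
  have "finite (snd ` ?S)" using sub Gfin by (meson finite_Un finite_subset)
  moreover have "inj_on snd ?S"
  proof (rule inj_onI)
    fix x y assume x: "x \<in> ?S" and y: "y \<in> ?S" and e: "snd x = snd y"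
    obtain a t where xa: "x = (a,t)" by force
    obtain a' t' where ya: "y = (a',t')" by force
    have tt: "t' = t" using e xa ya by simp
    have m1: "(a,t) \<in> ?S" and m2: "(a',t) \<in> ?S" using x y xa ya tt by auto
    have "?e*?s*a^4 = ?e*?s*a'^4" using eqs[OF m1] eqs[OF m2] by simp
    hence "a^4 = a'^4" using K by simp
    moreover have "a \<ge> 0" "a' \<ge> 0" using m1 m2 by auto
    ultimately have "a = a'" by (meson power_eq_imp_eq_base zero_less_numeral)
    thus "x = y" using xa ya tt by simp
  qed
  ultimately show ?thesis using finite_imageD by blast
qed

end
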